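(* Let $M=\{D_1,\dots,D_m\}$, $m\ge2$, be a 2-disk system consisting of pairwise distinct disks. Then $\bigcap_{k=1}^m D_k\neq\emptyset$ if and only if there exist indices $i\ne j$ with $D_i\cap D_j\ne\emptyset$ such that the point $d_{ij}$ satisfies $d_{ij}\in D_k$ for all $1\le k\le m$.
   Context: A 2-disk system is a finite collection of closed disks $D_i=D(c_i;r_i)=\{x\in\mathbb R^2:\|x-c_i\|\le r_i\}$ with $r_i>0$; $\partial D_i$ denotes the boundary circle $\{x:\|x-c_i\|=r_i\}$. Definition of $d_{ij}$: for $i\neq j$ with $D_i\cap D_j\ne\emptyset$, write $c_j-c_i=(a,b)$ and $\mathbf n_{ij}=(-b,a)$. (1) If $\partial D_i\cap\partial D_j\ne\emptyset$, $d_{ij}$ is the unique point of $\partial D_i\cap\partial D_j$ with $\langle d_{ij}-c_i,\mathbf n_{ij}\rangle\ge0$. (2) If $\partial D_i\cap\partial D_j=\emptyset$ (so $r_i\ne r_j$ and one disk lies in the interior of the other), let $\lambda=\|c_i-c_j\|/|r_i-r_j|$; then $d_{ij}$ is the unique point of $\partial D(c_i;\lambda r_i)\cap\partial D(c_j;\lambda r_j)$ (when $c_i=c_j$ this means $d_{ij}=c_i$). *)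

theory Defs
  imports "HOL-Analysis.Analysis"
begin

text \<open>Points of the plane are vectors of type real^2; the disk D(c;r) is cball c r,
its boundary circle is sphere c r.\<close>

definition nrm :: "real^2 \<Rightarrow> real^2 \<Rightarrow> real^2" where
  "nrm ci cj = vector [- ((cj - ci) $ 2), (cj - ci) $ 1]"

definition dpt :: "real^2 \<Rightarrow> real \<Rightarrow> real^2 \<Rightarrow> real \<Rightarrow> real^2" where
  "dpt ci ri cj rj =
     (if sphere ci ri \<inter> sphere cj rj \<noteq> {}
      then (THE d. d \<in> sphere ci ri \<inter> sphere cj rj \<and> inner (d - ci) (nrm ci cj) \<ge> 0)
      else (let l = dist ci cj / \<bar>ri - rj\<bar>
            in THE d. d \<in> sphere ci (l * ri) \<inter> sphere cj (l * rj)))"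

end

theory Submission imports Defs begin

lemma dist2: "(dist (x::real^2) y)^2 = (x$1-y$1)^2 + (x$2-y$2)^2"
  by (simp add: dist_vec_def L2_set_def sum_2 dist_real_def power2_eq_square)

lemma inner2: "inner (x::real^2) y = x$1*y$1 + x$2*y$2"
  by (simp add: inner_vec_def sum_2)

lemma eq2: "(x::real^2) = y \<longleftrightarrow> x$1 = y$1 \<and> x$2 = y$2"
  by (simp add: vec_eq_iff forall_2)

lemma nrm1: "nrm ci cj $ 1 = - (cj$2 - ci$2)" and nrm2: "nrm ci cj $ 2 = cj$1 - ci$1"
  by (simp_all add: nrm_def)

lemma uniq:
  fixes c1 c2 d d' :: "real^2"
  assumes "c1 \<noteq> c2" "dist c1 d = r1" "dist c2 d = r2" "dist c1 d' = r1" "dist c2 d' = r2"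
    "inner (d - c1) (nrm c1 c2) \<ge> 0" "inner (d' - c1) (nrm c1 c2) \<ge> 0"
  shows "d = d'"
proof -
  define a where "a = c2$1 - c1$1"
  define b where "b = c2$2 - c1$2"
  define p1 where "p1 = d$1 - c1$1"
  define p2 where "p2 = d$2 - c1$2"
  define q1 where "q1 = d'$1 - c1$1"
  define q2 where "q2 = d'$2 - c1$2"
  have ab: "a^2 + b^2 > 0" using assms(1) by (auto simp: a_def b_def eq2 add_pos_nonneg add_nonneg_pos)
  have e1: "p1^2+p2^2 = q1^2+q2^2" using assms(2,4) dist2[of c1 d] dist2[of c1 d']
    by (simp add: p1_def p2_def q1_def q2_def power2_commute)
  have e2: "(p1-a)^2+(p2-b)^2 = (q1-a)^2+(q2-b)^2" using assms(3,5) dist2[of c2 d] dist2[of c2 d']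
    by (simp add: p1_def p2_def q1_def q2_def a_def b_def power2_commute algebra_simps)
  have s: "p1*a+p2*b = q1*a+q2*b" using e1 e2 by (simp add: power2_eq_square algebra_simps)
  have n1: "-p1*b+p2*a \<ge> 0" using assms(6) by (simp add: inner2 nrm1 nrm2 p1_def p2_def a_def b_def algebra_simps)
  have n2: "-q1*b+q2*a \<ge> 0" using assms(7) by (simp add: inner2 nrm1 nrm2 q1_def q2_def a_def b_def algebra_simps)
  have L: "(x1*a+x2*b)^2 + (-x1*b+x2*a)^2 = (x1^2+x2^2)*(a^2+b^2)" for x1 x2
    by (simp add: power2_eq_square algebra_simps)
  have "(-p1*b+p2*a)^2 = (-q1*b+q2*a)^2" using L[of p1 p2] L[of q1 q2] e1 s by simp
  hence t: "-p1*b+p2*a = -q1*b+q2*a" using n1 n2 by (simp add: power2_eq_iff_nonneg)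
  have w1: "(p1-q1)*(a^2+b^2) = 0"
  proof -
    have "(p1-q1)*(a^2+b^2) = a*((p1-q1)*a+(p2-q2)*b) - b*(-(p1-q1)*b+(p2-q2)*a)"
      by (simp add: power2_eq_square algebra_simps)
    also have "\<dots> = 0" using s t by (simp add: algebra_simps)
    finally show ?thesis .
  qed
  have w2: "(p2-q2)*(a^2+b^2) = 0"
  proof -
    have "(p2-q2)*(a^2+b^2) = b*((p1-q1)*a+(p2-q2)*b) + a*(-(p1-q1)*b+(p2-q2)*a)"
      by (simp add: power2_eq_square algebra_simps)
    also have "\<dots> = 0" using s t by (simp add: algebra_simps)
    finally show ?thesis .
  qed
  have "p1 = q1" "p2 = q2" using w1 w2 ab by auto
  thus ?thesis by (simp add: eq2 p1_def p2_def q1_def q2_def)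
qed

lemma flip: "inner (y - cj) (nrm cj ci) = - inner (y - ci) (nrm ci cj)"
  by (simp add: inner2 nrm1 nrm2 algebra_simps)

lemma V:
  fixes ci cj y :: "real^2"
  assumes "y \<in> sphere ci ri" "y \<in> sphere cj rj" "cball ci ri \<noteq> cball cj rj"
  shows "dpt ci ri cj rj = y \<or> dpt cj rj ci ri = y"
proof -
  have y1: "dist ci y = ri" "dist cj y = rj" using assms(1,2) by auto
  have ne: "ci \<noteq> cj"
  proof
    assume e: "ci = cj"
    hence "ri = rj" using y1 by simp
    thus False using assms(3) e by simp
  qed
  show ?thesis
  proof (cases "inner (y - ci) (nrm ci cj) \<ge> 0")
    case True
    have nn: "sphere ci ri \<inter> sphere cj rj \<noteq> {}" using assms(1,2) by blast
    have "(THE d. d \<in> sphere ci ri \<inter> sphere cj rj \<and> inner (d - ci) (nrm ci cj) \<ge> 0) = y"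
    proof (rule the_equality)
      show "y \<in> sphere ci ri \<inter> sphere cj rj \<and> inner (y - ci) (nrm ci cj) \<ge> 0"
        using assms(1,2) True by simp
      fix d assume d: "d \<in> sphere ci ri \<inter> sphere cj rj \<and> inner (d - ci) (nrm ci cj) \<ge> 0"
      have dd: "dist ci d = ri" "dist cj d = rj" using d by auto
      have "inner (d - ci) (nrm ci cj) \<ge> 0" using d by simp
      thus "d = y" by (rule uniq[OF ne dd y1 _ True])
    qed
    hence "dpt ci ri cj rj = y" unfolding dpt_def if_P[OF nn] .
    thus ?thesis ..
  next
    case False
    hence F: "inner (y - cj) (nrm cj ci) \<ge> 0" using flip[of y cj ci] by linarith
    have ne': "cj \<noteq> ci" using ne by simp
    have nn: "sphere cj rj \<inter> sphere ci ri \<noteq> {}" using assms(1,2) by blast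
    have "(THE d. d \<in> sphere cj rj \<inter> sphere ci ri \<and> inner (d - cj) (nrm cj ci) \<ge> 0) = y"
    proof (rule the_equality)
      show "y \<in> sphere cj rj \<inter> sphere ci ri \<and> inner (y - cj) (nrm cj ci) \<ge> 0"
        using assms(1,2) F by simp
      fix d assume d: "d \<in> sphere cj rj \<inter> sphere ci ri \<and> inner (d - cj) (nrm cj ci) \<ge> 0"
      have dd: "dist cj d = rj" "dist ci d = ri" using d by auto
      have "inner (d - cj) (nrm cj ci) \<ge> 0" using d by simp
      thus "d = y" by (rule uniq[OF ne' dd y1(2) y1(1) _ F])
    qed
    hence "dpt cj rj ci ri = y" unfolding dpt_def if_P[OF nn] .
    thus ?thesis ..
  qed
qed

lemma C2:
  fixes ci cj :: "real^2"
  assumes "cball ci ri \<subseteq> cball cj rj" "cball ci ri \<noteq> cball cj rj" "ri > 0"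
    "sphere ci ri \<inter> sphere cj rj = {}"
  shows "dpt ci ri cj rj \<in> cball ci ri"
proof -
  have "dist ci cj + ri \<le> rj \<or> ri < 0" using assms(1) cball_subset_cball_iff by blast
  hence h: "dist ci cj + ri \<le> rj" using assms(3) by auto
  have lt: "ri < rj"
  proof (rule ccontr)
    assume "\<not> ri < rj"
    hence "dist ci cj = 0" "ri = rj" using h zero_le_dist[of ci cj] by linarith+
    thus False using assms(2) by simp
  qed
  define l where "l = dist ci cj / \<bar>ri - rj\<bar>"
  have l: "l = dist ci cj / (rj - ri)" using lt by (simp add: l_def)
  have l0: "0 \<le> l" "l \<le> 1" using h lt by (auto simp: l field_simps)
  have ld: "dist ci cj = l * (rj - ri)" using lt by (simp add: l)
  define w where "w = ci + (l * ri / dist ci cj) *\<^sub>R (ci - cj)"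
  define P where "P = (\<lambda>d. d \<in> sphere ci (l * ri) \<inter> sphere cj (l * rj))"
  have Pd: "d = w" if "P d" for d
  proof (cases "ci = cj")
    case True
    hence "l = 0" by (simp add: l)
    thus ?thesis using that True by (simp add: P_def w_def)
  next
    case False
    hence dp: "dist ci cj > 0" by simp
    have a: "norm (d - ci) = l * ri" "norm (d - cj) = l * rj" using that
      by (auto simp: P_def dist_norm norm_minus_commute)
    have "norm ((d - ci) + (ci - cj)) = norm (d - ci) + norm (ci - cj)"
      using a ld by (simp add: dist_norm algebra_simps)
    hence "norm (d - ci) *\<^sub>R (ci - cj) = norm (ci - cj) *\<^sub>R (d - ci)"
      by (simp only: norm_triangle_eq)
    hence "(l * ri) *\<^sub>R (ci - cj) = dist ci cj *\<^sub>R (d - ci)" using a by (simp add: dist_norm)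
    hence "(1 / dist ci cj) *\<^sub>R ((l * ri) *\<^sub>R (ci - cj)) = d - ci" using dp by simp
    thus ?thesis by (simp add: w_def algebra_simps)
  qed
  have Pw: "P w"
  proof (cases "ci = cj")
    case True
    hence "l = 0" by (simp add: l)
    thus ?thesis using True by (simp add: P_def w_def)
  next
    case False
    hence dp: "dist ci cj > 0" by simp
    have "dist ci w = l * ri" using dp l0 assms(3)
      by (simp add: w_def dist_norm abs_mult norm_minus_commute)
    moreover have "w - cj = (1 + l * ri / dist ci cj) *\<^sub>R (ci - cj)"
      by (simp add: w_def algebra_simps)
    hence "dist cj w = (1 + l * ri / dist ci cj) * dist ci cj" using dp l0 assms(3)
      by (simp add: dist_norm norm_minus_commute[of cj w] dist_commute)
    hence "dist cj w = dist ci cj + l * ri" using dp by (simp add: distrib_right)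
    hence "dist cj w = l * rj" using ld by (simp add: algebra_simps)
    ultimately show ?thesis by (simp add: P_def)
  qed
  have "(THE d. P d) = w" using Pw Pd by (rule the_equality)
  hence "dpt ci ri cj rj = w"
    unfolding dpt_def using assms(4) by (simp only: l_def[symmetric] Let_def P_def if_False not_True_eq_False) simp
  moreover have "dist ci w \<le> ri" using Pw l0 assms(3) by (simp add: P_def mult_le_cancel_right1)
  ultimately show ?thesis by simp
qed

lemma SB:
  fixes ci ck :: "real^2"
  assumes "sphere ci ri \<subseteq> cball ck rk" "ri > 0"
  shows "cball ci ri \<subseteq> cball ck rk"
proof -
  have "dist ci ck + ri \<le> rk"
  proof (cases "ci = ck")
    case True
    obtain z where "z \<in> sphere ci ri" using assms(2) sphere_eq_empty[of ci ri] by fastforce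
    thus ?thesis using assms(1) True by auto
  next
    case False
    hence dp: "dist ci ck > 0" by simp
    define z where "z = ci + (ri / dist ci ck) *\<^sub>R (ci - ck)"
    have "dist ci z = ri" using dp assms(2) by (simp add: z_def dist_norm)
    hence "z \<in> cball ck rk" using assms(1) by auto
    moreover have "z - ck = (1 + ri / dist ci ck) *\<^sub>R (ci - ck)" by (simp add: z_def algebra_simps)
    hence "dist ck z = (1 + ri / dist ci ck) * dist ci ck" using dp assms(2)
      by (simp add: dist_norm norm_minus_commute[of ck z] dist_commute)
    hence "dist ck z = dist ci ck + ri" using dp by (simp add: distrib_right)
    ultimately show ?thesis by simp
  qed
  thus ?thesis using cball_subset_cball_iff by blast
qed

theorem lemma4p1:
  fixes c :: "nat \<Rightarrow> real^2" and r :: "nat \<Rightarrow> real" and m :: nat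
  assumes "m \<ge> 2"
    and "\<forall>k\<in>{1..m}. r k > 0"
    and "\<forall>i\<in>{1..m}. \<forall>j\<in>{1..m}. i \<noteq> j \<longrightarrow> cball (c i) (r i) \<noteq> cball (c j) (r j)"
  shows "(\<Inter>k\<in>{1..m}. cball (c k) (r k)) \<noteq> {} \<longleftrightarrow>
    (\<exists>i\<in>{1..m}. \<exists>j\<in>{1..m}. i \<noteq> j \<and> cball (c i) (r i) \<inter> cball (c j) (r j) \<noteq> {} \<and>
       (\<forall>k\<in>{1..m}. dpt (c i) (r i) (c j) (r j) \<in> cball (c k) (r k)))" (is "?K \<noteq> {} \<longleftrightarrow> ?R")
proof
  assume ?R thus "?K \<noteq> {}" by blast
next
  assume Kne: "?K \<noteq> {}"
  define K where "K = ?K"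
  have cK: "closed K" unfolding K_def by (intro closed_INT) auto
  have "K \<subseteq> cball (c 1) (r 1)" unfolding K_def using assms(1) by auto
  hence "bounded K" using bounded_cball bounded_subset by blast
  hence "K \<noteq> UNIV" by auto
  hence "frontier K \<noteq> {}" using Kne frontier_not_empty unfolding K_def by blast
  then obtain x where xf: "x \<in> frontier K" by blast
  have xK: "x \<in> K" using xf frontier_subset_closed[OF cK] by blast
  have "x \<in> closure (- K)" using xf frontier_closures by blast
  moreover have "closure (- K) \<subseteq> (\<Union>k\<in>{1..m}. - ball (c k) (r k))"
    by (rule closure_minimal) (auto simp: K_def)
  ultimately obtain i where i: "i \<in> {1..m}" "x \<notin> ball (c i) (r i)" by blast
  have "dist (c i) x \<le> r i" using xK i(1) unfolding K_def by auto
  hence xi: "x \<in> sphere (c i) (r i)" using i(2) by simp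
  show ?R
  proof (cases "sphere (c i) (r i) \<subseteq> K")
    case True
    have sub: "cball (c i) (r i) \<subseteq> cball (c k) (r k)" if "k \<in> {1..m}" for k
      using SB[of "c i" "r i" "c k" "r k"] True that assms(2) i(1) unfolding K_def by blast
    define j where "j = (if i = 1 then 2 else (1::nat))"
    have j: "j \<in> {1..m}" "j \<noteq> i" using assms(1) i(1) by (auto simp: j_def)
    have dij: "cball (c i) (r i) \<noteq> cball (c j) (r j)" using assms(3) i(1) j by auto
    have "r i > 0" using assms(2) i(1) by blast
    hence ci: "c i \<in> cball (c i) (r i)" by simp
    hence cij: "cball (c i) (r i) \<inter> cball (c j) (r j) \<noteq> {}" using sub[OF j(1)] by blast
    show ?R
    proof (cases "sphere (c i) (r i) \<inter> sphere (c j) (r j) = {}")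
      case True
      have "dpt (c i) (r i) (c j) (r j) \<in> cball (c i) (r i)"
        using C2[OF sub[OF j(1)] dij _ True] assms(2) i(1) by auto
      hence "\<forall>k\<in>{1..m}. dpt (c i) (r i) (c j) (r j) \<in> cball (c k) (r k)" using sub by blast
      thus ?R using i(1) j cij by (intro bexI[of _ i] bexI[of _ j] conjI) auto
    next
      case False
      then obtain y where y: "y \<in> sphere (c i) (r i)" "y \<in> sphere (c j) (r j)" by blast
      have yi: "y \<in> cball (c i) (r i)" using y by auto
      from V[OF y dij] show ?R
      proof
        assume "dpt (c i) (r i) (c j) (r j) = y"
        hence "\<forall>k\<in>{1..m}. dpt (c i) (r i) (c j) (r j) \<in> cball (c k) (r k)" using sub yi by blast
        thus ?R using i(1) j cij by (intro bexI[of _ i] bexI[of _ j] conjI) auto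
      next
        assume "dpt (c j) (r j) (c i) (r i) = y"
        hence "\<forall>k\<in>{1..m}. dpt (c j) (r j) (c i) (r i) \<in> cball (c k) (r k)" using sub yi by blast
        moreover have "cball (c j) (r j) \<inter> cball (c i) (r i) \<noteq> {}" using cij by blast
        ultimately show ?R using i(1) j by (intro bexI[of _ j] bexI[of _ i] conjI) auto
      qed
    qed
  next
    case False
    define S where "S = sphere (c i) (r i) \<inter> K"
    have cl: "closedin (top_of_set (sphere (c i) (r i))) S"
      unfolding S_def using closedin_closed_Int[OF cK] .
    have "connected (sphere (c i) (r i))" by (rule connected_sphere) simp
    hence "\<not> openin (top_of_set (sphere (c i) (r i))) S"
      using cl xi xK False unfolding connected_clopen S_def by blast
    then obtain y where yS: "y \<in> S" and ny: "\<And>e. e > 0 \<Longrightarrow> \<not> (ball y e \<inter> sphere (c i) (r i) \<subseteq> S)"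
      unfolding openin_contains_ball S_def by auto
    have "y \<in> closure (sphere (c i) (r i) - K)"
      unfolding closure_approachable
    proof (intro allI impI)
      fix e :: real assume "e > 0"
      then obtain z where "z \<in> ball y e" "z \<in> sphere (c i) (r i)" "z \<notin> S" using ny by blast
      thus "\<exists>z\<in>sphere (c i) (r i) - K. dist z y < e" by (auto simp: S_def dist_commute)
    qed
    moreover have "closure (sphere (c i) (r i) - K) \<subseteq> (\<Union>k\<in>{1..m}-{i}. - ball (c k) (r k))"
      by (rule closure_minimal) (auto simp: K_def)
    ultimately obtain k where k: "k \<in> {1..m}" "k \<noteq> i" "y \<notin> ball (c k) (r k)" by blast
    have yK: "y \<in> K" and yi: "y \<in> sphere (c i) (r i)" using yS by (auto simp: S_def)
    have "dist (c k) y \<le> r k" using yK k(1) unfolding K_def by auto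
    hence yk: "y \<in> sphere (c k) (r k)" using k(3) by simp
    have dik: "cball (c i) (r i) \<noteq> cball (c k) (r k)" using assms(3) i(1) k by auto
    have yall: "\<forall>l\<in>{1..m}. y \<in> cball (c l) (r l)" using yK unfolding K_def by blast
    have ne1: "cball (c i) (r i) \<inter> cball (c k) (r k) \<noteq> {}" proof
      assume "cball (c i) (r i) \<inter> cball (c k) (r k) = {}"
      moreover have "y \<in> cball (c i) (r i)" "y \<in> cball (c k) (r k)" using yi yk by auto
      ultimately show False by blast
    qed
    hence ne2: "cball (c k) (r k) \<inter> cball (c i) (r i) \<noteq> {}" by blast
    from V[OF yi yk dik] show ?R
    proof
      assume "dpt (c i) (r i) (c k) (r k) = y"
      thus ?R using yall i(1) k ne1 by (intro bexI[of _ i] bexI[of _ k] conjI) auto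
    next
      assume "dpt (c k) (r k) (c i) (r i) = y"
      thus ?R using yall i(1) k ne2 by (intro bexI[of _ k] bexI[of _ i] conjI) auto
    qed
  qed
qed

end
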